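(* Let $\varPhi\subset\mathbb{E}^3$ be a skew ruled surface with invariants $\delta,\kappa,\lambda$, right normalized with support function $q=\frac{f(u)+g(u)v}{w}$, neither $f$ nor $g$ the zero function. Then the Tchebychev vector field $\overline{T}$ is incompressible with respect to the first fundamental form of $\varPhi$ (i.e. $\operatorname{div}^I\overline{T}=0$) if and only if $\varPhi$ is conoidal with constant distribution parameter $\delta=c_2\neq0$, $g$ is a nonvanishing constant $c_1$, and $f=c_1c_2\int\lambda\,\mathrm{d}u+c_3$, $c_3\in\mathbb{R}$.
   Context: $\varPhi$ is a ruled $C^r$-surface ($r\ge3$) with nonvanishing Gaussian curvature, in standard parameters $\overline{x}(u,v)=\overline{s}(u)+v\,\overline{e}(u)$, $|\overline{e}|=|\overline{e}'|=1$, $\langle\overline{s}',\overline{e}'\rangle=0$. Frame $\overline{n}=\overline{e}'$, $\overline{z}=\overline{e}\times\overline{n}$. Invariants: distribution parameter $\delta=(\overline{s}',\overline{e},\overline{e}')\neq0$, $\kappa=(\overline{e},\overline{e}',\overline{e}'')$, $\lambda=\cot\sphericalangle(\overline{e},\overline{s}')$, $\overline{s}'=\delta\lambda\overline{e}+\delta\overline{z}$. Conoidal means $\kappa\equiv0$. $w=\sqrt{\delta^2+v^2}$ (so $w^2$ is the discriminant of the first fundamental form), $\overline{\xi}=(\delta\overline{n}-v\overline{z})/w$. $h_{11}=-(\kappa w^2+\delta'v-\delta^2\lambda)/w$, $h_{12}=\delta/w$, $h_{22}=0$. A relative normalization is determined by its support function $q=\langle\overline{\xi},\overline{y}\rangle\neq0$;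 right normalization: $q=(f+gv)/w$, $f,g$ functions of $u$. Relative metric $G_{ij}=q^{-1}h_{ij}$, Darboux tensor $A_{ijk}=q^{-1}\langle\overline{\xi},\nabla^G_k\nabla^G_j\overline{x}_{/i}\rangle$, Tchebychev vector $\overline{T}=T^m\overline{x}_{/m}$, $T^m=\frac12A_i^{\ im}$; equivalently $T^1=\frac{w^2q_{/2}+vq}{\delta w}$, $T^2=\frac{2\delta w^2q_{/1}+\delta'q(\delta^2-v^2)}{2\delta^2w}+\frac{T^1(\kappa w^2+\delta'v-\delta^2\lambda)}{\delta}$. The divergence with respect to the first fundamental form is $\operatorname{div}^I\overline{T}=\frac{(wT^i)_{/i}}{w}$ (sum over $i$, $_{/1}=\partial_u$, $_{/2}=\partial_v$). $\int\cdots\mathrm{d}u$ denotes an antiderivative. *)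

theory Defs
  imports "HOL-Analysis.Analysis" "HOL-Analysis.Cross3"
begin

text \<open>Ruled surface x(u,v) = s(u) + v e(u) over an open u-interval I.
  All notions below are taken verbatim from the paper's setup.\<close>

definition vd :: "(real \<Rightarrow> real^3) \<Rightarrow> real \<Rightarrow> real^3" where
  "vd c = (\<lambda>t. vector_derivative c (at t))"

definition C3_on :: "real set \<Rightarrow> (real \<Rightarrow> real^3) \<Rightarrow> bool" where
  "C3_on I c \<longleftrightarrow> (\<forall>t\<in>I. c differentiable (at t) \<and> vd c differentiable (at t)
      \<and> vd (vd c) differentiable (at t)) \<and> continuous_on I (vd (vd (vd c)))"

definition standard_ruled :: "real set \<Rightarrow> (real \<Rightarrow> real^3) \<Rightarrow> (real \<Rightarrow> real^3) \<Rightarrow> bool" where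
  "standard_ruled I s e \<longleftrightarrow> C3_on I s \<and> C3_on I e \<and>
     (\<forall>u\<in>I. norm (e u) = 1 \<and> norm (vd e u) = 1 \<and> vd s u \<bullet> vd e u = 0)"

definition dparam :: "(real \<Rightarrow> real^3) \<Rightarrow> (real \<Rightarrow> real^3) \<Rightarrow> real \<Rightarrow> real" where
  "dparam s e u = vd s u \<bullet> cross3 (e u) (vd e u)"

definition kappa :: "(real \<Rightarrow> real^3) \<Rightarrow> real \<Rightarrow> real" where
  "kappa e u = e u \<bullet> cross3 (vd e u) (vd (vd e) u)"

text \<open>lambda, defined through s' = delta lambda e + delta z (z = e \<times> e').\<close>
definition lambda_inv :: "(real \<Rightarrow> real^3) \<Rightarrow> (real \<Rightarrow> real^3) \<Rightarrow> real \<Rightarrow> real" where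
  "lambda_inv s e u = (vd s u \<bullet> e u) / dparam s e u"

definition wfun :: "(real \<Rightarrow> real^3) \<Rightarrow> (real \<Rightarrow> real^3) \<Rightarrow> real \<Rightarrow> real \<Rightarrow> real" where
  "wfun s e u v = sqrt ((dparam s e u)\<^sup>2 + v\<^sup>2)"

definition qfun :: "(real \<Rightarrow> real^3) \<Rightarrow> (real \<Rightarrow> real^3) \<Rightarrow> (real \<Rightarrow> real) \<Rightarrow> (real \<Rightarrow> real)
    \<Rightarrow> real \<Rightarrow> real \<Rightarrow> real" where
  "qfun s e f g u v = (f u + g u * v) / wfun s e u v"

definition T1 :: "(real \<Rightarrow> real^3) \<Rightarrow> (real \<Rightarrow> real^3) \<Rightarrow> (real \<Rightarrow> real) \<Rightarrow> (real \<Rightarrow> real)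
    \<Rightarrow> real \<Rightarrow> real \<Rightarrow> real" where
  "T1 s e f g u v =
     ((wfun s e u v)\<^sup>2 * deriv (\<lambda>y. qfun s e f g u y) v + v * qfun s e f g u v)
       / (dparam s e u * wfun s e u v)"

definition T2 :: "(real \<Rightarrow> real^3) \<Rightarrow> (real \<Rightarrow> real^3) \<Rightarrow> (real \<Rightarrow> real) \<Rightarrow> (real \<Rightarrow> real)
    \<Rightarrow> real \<Rightarrow> real \<Rightarrow> real" where
  "T2 s e f g u v =
     (let d = dparam s e u; d' = deriv (dparam s e) u; w = wfun s e u v; q = qfun s e f g u v
      in (2 * d * w\<^sup>2 * deriv (\<lambda>x. qfun s e f g x v) u + d' * q * (d\<^sup>2 - v\<^sup>2)) / (2 * d\<^sup>2 * w)
         + T1 s e f g u v * (kappa e u * w\<^sup>2 + d' * v - d\<^sup>2 * lambda_inv s e u) / d)"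

definition divI_T :: "(real \<Rightarrow> real^3) \<Rightarrow> (real \<Rightarrow> real^3) \<Rightarrow> (real \<Rightarrow> real) \<Rightarrow> (real \<Rightarrow> real)
    \<Rightarrow> real \<Rightarrow> real \<Rightarrow> real" where
  "divI_T s e f g u v =
     (deriv (\<lambda>x. wfun s e x v * T1 s e f g x v) u
      + deriv (\<lambda>y. wfun s e u y * T2 s e f g u y) v) / wfun s e u v"

end

theory Submission
  imports Defs "HOL-Computational_Algebra.Polynomial"
begin

lemma differentiable_cross3:
  fixes f g :: "real \<Rightarrow> real^3"
  assumes "f differentiable (at t)" "g differentiable (at t)"
  shows "(\<lambda>x. cross3 (f x) (g x)) differentiable (at t)"
proof -
  have bb: "bounded_bilinear cross3"
    using bilinear_conv_bounded_bilinear bilinear_cross by blast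
  from assms obtain f' g' where "(f has_derivative f') (at t)" "(g has_derivative g') (at t)"
    unfolding differentiable_def by blast
  from bounded_bilinear.FDERIV[OF bb this] show ?thesis
    unfolding differentiable_def by blast
qed

lemma sqrt_chain:
  assumes "(h has_real_derivative h') (at x)" "0 < h x"
  shows "((\<lambda>x. sqrt (h x)) has_real_derivative h' / (2 * sqrt (h x))) (at x)"
  using DERIV_chain2[OF DERIV_real_sqrt[OF assms(2)] assms(1)]
  by (rule DERIV_cong) (simp add: field_simps)

lemma w_pos: "dparam s e u \<noteq> 0 \<Longrightarrow> wfun s e u v > 0"
  unfolding wfun_def by (simp add: add_pos_nonneg)

lemma w_sq: "dparam s e u \<noteq> 0 \<Longrightarrow> (wfun s e u v)^2 = (dparam s e u)^2 + v^2"
  unfolding wfun_def by (simp add: add_pos_nonneg)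

lemma wv_deriv:
  assumes "dparam s e u \<noteq> 0"
  shows "((\<lambda>y. wfun s e u y) has_real_derivative v / wfun s e u v) (at v)"
proof -
  have p: "0 < (dparam s e u)^2 + v^2" using assms by (simp add: add_pos_nonneg)
  have "((\<lambda>y. (dparam s e u)^2 + y^2) has_real_derivative 2 * v) (at v)"
    by (auto intro!: derivative_eq_intros)
  from sqrt_chain[OF this p] show ?thesis unfolding wfun_def
    by (rule DERIV_cong) simp
qed

lemma wu_deriv:
  assumes "dparam s e u \<noteq> 0" "(dparam s e has_real_derivative D') (at u)"
  shows "((\<lambda>x. wfun s e x v) has_real_derivative dparam s e u * D' / wfun s e u v) (at u)"
proof -
  have p: "0 < (dparam s e u)^2 + v^2" using assms by (simp add: add_pos_nonneg)
  have "((\<lambda>x. (dparam s e x)^2 + v^2) has_real_derivative 2 * dparam s e u * D') (at u)"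
    by (auto intro!: derivative_eq_intros assms(2))
  from sqrt_chain[OF this p] show ?thesis unfolding wfun_def
    by (rule DERIV_cong) simp
qed

lemma qv_deriv:
  assumes "dparam s e u \<noteq> 0"
  shows "((\<lambda>y. qfun s e f g u y) has_real_derivative
     (g u * (dparam s e u)^2 - f u * v) / (wfun s e u v)^3) (at v)"
proof -
  note W = w_pos[OF assms, of v] w_sq[OF assms, of v]
  show ?thesis
    unfolding qfun_def
    apply (rule derivative_eq_intros wv_deriv[OF assms] refl)+
    using W apply simp
    using W apply (simp add: field_simps power3_eq_cube power2_eq_square)
    done
qed

lemma T1_eq:
  assumes "dparam s e u \<noteq> 0"
  shows "T1 s e f g u v = g u / dparam s e u"
proof -
  note W = w_pos[OF assms, of v] w_sq[OF assms, of v]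
  show ?thesis
  proof -
    define W where "W = wfun s e u v"
    define D where "D = dparam s e u"
    have Wp: "W > 0" and Ws: "W^2 = D^2 + v^2" using W unfolding W_def D_def by auto
    have "T1 s e f g u v = (W^2 * ((g u * D^2 - f u * v) / W^3) + v * ((f u + g u * v) / W)) / (D * W)"
      unfolding T1_def DERIV_imp_deriv[OF qv_deriv[OF assms]] W_def D_def qfun_def ..
    also have "\<dots> = ((g u * D^2 - f u * v) + v * (f u + g u * v)) / (D * W^2)"
      using Wp assms unfolding D_def by (simp add: field_simps power3_eq_cube power2_eq_square)
    also have "\<dots> = g u * W^2 / (D * W^2)" unfolding Ws by (simp add: algebra_simps power2_eq_square)
    also have "\<dots> = g u / D" using Wp by simp
    finally show ?thesis unfolding D_def .
  qed
qed

lemma qu_deriv: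
  assumes "dparam s e u \<noteq> 0" "(dparam s e has_real_derivative D') (at u)"
    "(f has_real_derivative F') (at u)" "(g has_real_derivative G') (at u)"
  shows "((\<lambda>x. qfun s e f g x y) has_real_derivative
     (F' + G' * y) / wfun s e u y - (f u + g u * y) * dparam s e u * D' / (wfun s e u y)^3) (at u)"
proof -
  note W = w_pos[OF assms(1), of y] w_sq[OF assms(1), of y]
  have p: "0 < y*y + dparam s e u * dparam s e u" using assms(1) by (metis add_nonneg_pos not_real_square_gt_zero zero_le_square)
  show ?thesis
    unfolding qfun_def
    apply (rule derivative_eq_intros wu_deriv[OF assms(1,2)] assms(3,4) refl)+
    using W apply simp
    using W(1) apply (simp add: field_simps power3_eq_cube power2_eq_square)
    done
qed

definition Pf where
  "Pf D D' F F' G G' K L y = (F' + G' * y) / D - D' * (F + G * y) / (2 * D^2)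
      + G * (K * (D^2 + y^2) + D' * y - D^2 * L) / D^2"

lemma T2_eq:
  assumes "dparam s e u \<noteq> 0" "(dparam s e has_real_derivative D') (at u)"
    "(f has_real_derivative F') (at u)" "(g has_real_derivative G') (at u)"
  shows "T2 s e f g u y = Pf (dparam s e u) D' (f u) F' (g u) G' (kappa e u) (lambda_inv s e u) y"
proof -
  define W where "W = wfun s e u y"
  define D where "D = dparam s e u"
  have Wp: "W > 0" and Ws: "W^2 = D^2 + y^2" using w_pos[OF assms(1)] w_sq[OF assms(1)]
    unfolding W_def D_def by auto
  have D0: "D \<noteq> 0" using assms(1) D_def by simp
  have "T2 s e f g u y = (2 * D * W^2 * ((F' + G' * y) / W - (f u + g u * y) * D * D' / W^3)
       + D' * ((f u + g u * y) / W) * (D^2 - y^2)) / (2 * D^2 * W)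
       + g u / D * (kappa e u * W^2 + D' * y - D^2 * lambda_inv s e u) / D"
    unfolding T2_def Let_def DERIV_imp_deriv[OF qu_deriv[OF assms]] DERIV_imp_deriv[OF assms(2)]
      T1_eq[OF assms(1)] by (simp only: W_def D_def qfun_def)
  also have "\<dots> = (2 * D * (W^2 * (F' + G' * y)) - 2 * D * (f u + g u * y) * D * D'
       + D' * (f u + g u * y) * (D^2 - y^2)) / (2 * D^2 * W^2)
       + g u * (kappa e u * W^2 + D' * y - D^2 * lambda_inv s e u) / D^2"
    using Wp D0 by (simp add: field_simps power3_eq_cube power2_eq_square)
  also have "2 * D * (W^2 * (F' + G' * y)) - 2 * D * (f u + g u * y) * D * D'
       + D' * (f u + g u * y) * (D^2 - y^2) = W^2 * (2 * D * (F' + G' * y) - D' * (f u + g u * y))"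
    unfolding Ws by (simp add: algebra_simps power2_eq_square)
  also have "W^2 * (2 * D * (F' + G' * y) - D' * (f u + g u * y)) / (2 * D^2 * W^2)
     = (2 * D * (F' + G' * y) - D' * (f u + g u * y)) / (2 * D^2)" using Wp by simp
  also have "(2 * D * (F' + G' * y) - D' * (f u + g u * y)) / (2 * D^2)
       + g u * (kappa e u * W^2 + D' * y - D^2 * lambda_inv s e u) / D^2
      = Pf D D' (f u) F' (g u) G' (kappa e u) (lambda_inv s e u) y"
    unfolding Ws Pf_def using D0 by (simp add: field_simps power2_eq_square)
  finally show ?thesis unfolding D_def .
qed

lemma wT1_deriv:
  assumes "open S" "u \<in> S" "\<forall>x\<in>S. dparam s e x \<noteq> 0"
    "(dparam s e has_real_derivative D') (at u)" "(g has_real_derivative G') (at u)"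
  shows "((\<lambda>x. wfun s e x v * T1 s e f g x v) has_real_derivative
     D' * g u / wfun s e u v + wfun s e u v * (G' * dparam s e u - g u * D') / (dparam s e u)^2) (at u)"
proof -
  have D0: "dparam s e u \<noteq> 0" using assms by auto
  have W: "wfun s e u v > 0" using w_pos[OF D0] .
  have h1: "((\<lambda>x. g x / dparam s e x) has_real_derivative
      (G' * dparam s e u - g u * D') / (dparam s e u * dparam s e u)) (at u)"
    using DERIV_divide[OF assms(5) assms(4) D0] by (simp add: algebra_simps)
  have "((\<lambda>x. wfun s e x v * (g x / dparam s e x)) has_real_derivative
     D' * g u / wfun s e u v + wfun s e u v * (G' * dparam s e u - g u * D') / (dparam s e u)^2) (at u)"
    using DERIV_mult[OF wu_deriv[OF D0 assms(4)] h1]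
    apply (rule DERIV_cong)
    using D0 W by (simp add: field_simps power2_eq_square)
  then show ?thesis
    apply (rule has_field_derivative_transform_within_open[OF _ assms(1,2)])
    using assms(3) T1_eq by simp
qed

definition dPf where
  "dPf D D' F F' G G' K L y = G' / D - D' * G / (2 * D^2) + G * (K * (2 * y) + D') / D^2"

lemma Pf_deriv:
  assumes "D \<noteq> 0"
  shows "((\<lambda>y. Pf D D' F F' G G' K L y) has_real_derivative dPf D D' F F' G G' K L v) (at v)"
  unfolding Pf_def dPf_def using assms
  by (auto intro!: derivative_eq_intros simp: field_simps power2_eq_square)

lemma wT2_deriv:
  assumes "dparam s e u \<noteq> 0" "(dparam s e has_real_derivative D') (at u)"
    "(f has_real_derivative F') (at u)" "(g has_real_derivative G') (at u)"
  shows "((\<lambda>y. wfun s e u y * T2 s e f g u y) has_real_derivative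
     v / wfun s e u v * Pf (dparam s e u) D' (f u) F' (g u) G' (kappa e u) (lambda_inv s e u) v
     + wfun s e u v * dPf (dparam s e u) D' (f u) F' (g u) G' (kappa e u) (lambda_inv s e u) v) (at v)"
proof -
  have D0: "dparam s e u \<noteq> 0" using assms by auto
  have "((\<lambda>y. wfun s e u y * Pf (dparam s e u) D' (f u) F' (g u) G' (kappa e u) (lambda_inv s e u) y)
     has_real_derivative
     v / wfun s e u v * Pf (dparam s e u) D' (f u) F' (g u) G' (kappa e u) (lambda_inv s e u) v
     + wfun s e u v * dPf (dparam s e u) D' (f u) F' (g u) G' (kappa e u) (lambda_inv s e u) v) (at v)"
    using DERIV_mult[OF wv_deriv[OF D0] Pf_deriv[OF D0]]
    by (rule DERIV_cong) (simp add: algebra_simps)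
  then show ?thesis using T2_eq[OF assms] by simp
qed

lemma alg_main:
  fixes D D' F F' G G' K L W v :: real
  assumes D0: "D \<noteq> 0" and Wp: "W > 0" and Ws: "W^2 = D^2 + v^2"
  shows "W^2 * ((D' * G / W + W * (G' * D - G * D') / D^2
      + (v / W * Pf D D' F F' G G' K L v + W * dPf D D' F F' G G' K L v)) / W)
    = (2*D*G' + G*D'/2) + (F'/D - D'*F/(2*D^2) + 3*G*K - G*L) * v + (3*G'/D) * v^2 + (3*G*K/D^2) * v^3"
proof -
  have "W^2 * ((D' * G / W + W * (G' * D - G * D') / D^2
      + (v / W * Pf D D' F F' G G' K L v + W * dPf D D' F F' G G' K L v)) / W)
     = D' * G + W^2 * (G' * D - G * D') / D^2 + v * Pf D D' F F' G G' K L v + W^2 * dPf D D' F F' G G' K L v"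
    using Wp by (simp add: field_simps power2_eq_square)
  also have "\<dots> = (2*D*G' + G*D'/2) + (F'/D - D'*F/(2*D^2) + 3*G*K - G*L) * v + (3*G'/D) * v^2 + (3*G*K/D^2) * v^3"
    unfolding Ws Pf_def dPf_def using D0 by (simp add: field_simps power2_eq_square power3_eq_cube)
  finally show ?thesis .
qed

lemma div_poly:
  assumes "open S" "u \<in> S" "\<forall>x\<in>S. dparam s e x \<noteq> 0"
    "(dparam s e has_real_derivative D') (at u)"
    "(f has_real_derivative F') (at u)" "(g has_real_derivative G') (at u)"
  shows "(wfun s e u v)^2 * divI_T s e f g u v =
    (2*dparam s e u*G' + g u*D'/2)
    + (F'/dparam s e u - D'*f u/(2*(dparam s e u)^2) + 3*g u*kappa e u - g u*lambda_inv s e u) * v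
    + (3*G'/dparam s e u) * v^2 + (3*g u*kappa e u/(dparam s e u)^2) * v^3"
proof -
  have D0: "dparam s e u \<noteq> 0" using assms by auto
  show ?thesis
    unfolding divI_T_def DERIV_imp_deriv[OF wT1_deriv[OF assms(1-4,6)]]
      DERIV_imp_deriv[OF wT2_deriv[OF D0 assms(4-6)]]
    by (rule alg_main[OF D0 w_pos[OF D0] w_sq[OF D0]])
qed

lemma cubic_zero:
  fixes a0 a1 a2 a3 c d :: real
  assumes "c < d" "\<forall>v\<in>{c<..<d}. a0 + a1 * v + a2 * v^2 + a3 * v^3 = 0"
  shows "a0 = 0 \<and> a1 = 0 \<and> a2 = 0 \<and> a3 = 0"
proof -
  define p where "p = [:a0, a1, a2, a3:]"
  have ev: "poly p v = a0 + a1 * v + a2 * v^2 + a3 * v^3" for v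
    unfolding p_def by (simp add: algebra_simps power2_eq_square power3_eq_cube)
  have "{c<..<d} \<subseteq> {x. poly p x = 0}" using assms(2) ev by auto
  moreover have "infinite {c<..<d}" using assms(1) by simp
  ultimately have "infinite {x. poly p x = 0}" using finite_subset by blast
  then have "p = 0" using poly_roots_finite by blast
  then show ?thesis unfolding p_def by simp
qed

lemma dparam_differentiable:
  assumes "standard_ruled I s e" "u \<in> I"
  shows "dparam s e differentiable (at u)"
proof -
  from assms have "s differentiable (at u)" "vd s differentiable (at u)"
     "e differentiable (at u)" "vd e differentiable (at u)"
    unfolding standard_ruled_def C3_on_def by auto
  then have "(\<lambda>x. vd s x \<bullet> cross3 (e x) (vd e x)) differentiable (at u)"
    by (intro differentiable_inner differentiable_cross3)
  then show ?thesis unfolding dparam_def[abs_def] by simp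
qed

theorem proposition8:
  fixes s e :: "real \<Rightarrow> real^3" and f g :: "real \<Rightarrow> real" and a b c d :: real
  defines "I \<equiv> {a<..<b}" and "J \<equiv> {c<..<d}"
  assumes "a < b" and "c < d"
    and ruled: "standard_ruled I s e"
    and skew: "\<forall>u\<in>I. dparam s e u \<noteq> 0"
    and f_diff: "\<forall>u\<in>I. f differentiable (at u)"
    and g_diff: "\<forall>u\<in>I. g differentiable (at u)"
    and q_nz: "\<forall>u\<in>I. \<forall>v\<in>J. qfun s e f g u v \<noteq> 0"
    and f_nz: "\<exists>u\<in>I. f u \<noteq> 0"
    and g_nz: "\<exists>u\<in>I. g u \<noteq> 0"
  shows "(\<forall>u\<in>I. \<forall>v\<in>J. divI_T s e f g u v = 0) \<longleftrightarrow>
         ((\<forall>u\<in>I. kappa e u = 0) \<and>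
          (\<exists>c1 c2 c3 \<Lambda>. c1 \<noteq> 0 \<and> c2 \<noteq> 0 \<and>
             (\<forall>u\<in>I. dparam s e u = c2) \<and> (\<forall>u\<in>I. g u = c1) \<and>
             (\<forall>u\<in>I. (\<Lambda> has_real_derivative lambda_inv s e u) (at u)) \<and>
             (\<forall>u\<in>I. f u = c1 * c2 * \<Lambda> u + c3)))"
proof -
  let ?\<delta> = "dparam s e"
  have oI: "open I" unfolding I_def by simp
  have dd: "(?\<delta> has_real_derivative deriv ?\<delta> u) (at u)" if "u \<in> I" for u
    using dparam_differentiable[OF ruled that] DERIV_deriv_iff_real_differentiable by blast
  have df: "(f has_real_derivative deriv f u) (at u)" if "u \<in> I" for u
    using f_diff that DERIV_deriv_iff_real_differentiable by blast
  have dg: "(g has_real_derivative deriv g u) (at u)" if "u \<in> I" for u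
    using g_diff that DERIV_deriv_iff_real_differentiable by blast
  have hp: "(wfun s e u v)^2 * divI_T s e f g u v =
    (2*?\<delta> u*deriv g u + g u*deriv ?\<delta> u/2)
    + (deriv f u/?\<delta> u - deriv ?\<delta> u*f u/(2*(?\<delta> u)^2) + 3*g u*kappa e u - g u*lambda_inv s e u) * v
    + (3*deriv g u/?\<delta> u) * v^2 + (3*g u*kappa e u/(?\<delta> u)^2) * v^3" if "u \<in> I" for u v
    by (rule div_poly[OF oI that skew dd[OF that] df[OF that] dg[OF that]])
  show ?thesis
  proof
    assume H: "\<forall>u\<in>I. \<forall>v\<in>J. divI_T s e f g u v = 0"
    have co: "2*?\<delta> u*deriv g u + g u*deriv ?\<delta> u/2 = 0 \<and>
      deriv f u/?\<delta> u - deriv ?\<delta> u*f u/(2*(?\<delta> u)^2) + 3*g u*kappa e u - g u*lambda_inv s e u = 0 \<and>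
      3*deriv g u/?\<delta> u = 0 \<and> 3*g u*kappa e u/(?\<delta> u)^2 = 0" if u: "u \<in> I" for u
      apply (rule cubic_zero[OF \<open>c < d\<close>])
      apply (intro ballI)
      subgoal for v
        using hp[OF u, of v] H u unfolding J_def by (metis mult_zero_right)
      done
    have g0: "deriv g u = 0" if "u \<in> I" for u using co[OF that] skew that by auto
    obtain u0 where u0: "u0 \<in> I" "g u0 \<noteq> 0" using g_nz by blast
    have gc: "g u = g u0" if "u \<in> I" for u
      using DERIV_isconst3[OF \<open>a < b\<close>, of u u0 g] that u0 dg g0 unfolding I_def by auto
    have k0: "kappa e u = 0" if "u \<in> I" for u using co[OF that] skew that gc[OF that] u0 by auto
    have d0: "deriv ?\<delta> u = 0" if "u \<in> I" for u using co[OF that] skew that gc[OF that] u0 g0 by auto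
    have dc: "?\<delta> u = ?\<delta> u0" if "u \<in> I" for u
      using DERIV_isconst3[OF \<open>a < b\<close>, of u u0 ?\<delta>] that u0 dd d0 unfolding I_def by auto
    define c1 where "c1 = g u0"
    define c2 where "c2 = ?\<delta> u0"
    have c1: "c1 \<noteq> 0" using u0 c1_def by simp
    have c2: "c2 \<noteq> 0" using u0 skew c2_def by simp
    have fd: "deriv f u = c1 * c2 * lambda_inv s e u" if u: "u \<in> I" for u
    proof -
      have "deriv f u / c2 - c1 * lambda_inv s e u = 0"
        using co[OF u] k0[OF u] d0[OF u] dc[OF u] gc[OF u] c1_def c2_def by simp
      then show ?thesis using c2 by (simp add: field_simps)
    qed
    show "(\<forall>u\<in>I. kappa e u = 0) \<and>
          (\<exists>c1 c2 c3 \<Lambda>. c1 \<noteq> 0 \<and> c2 \<noteq> 0 \<and>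
             (\<forall>u\<in>I. dparam s e u = c2) \<and> (\<forall>u\<in>I. g u = c1) \<and>
             (\<forall>u\<in>I. (\<Lambda> has_real_derivative lambda_inv s e u) (at u)) \<and>
             (\<forall>u\<in>I. f u = c1 * c2 * \<Lambda> u + c3))"
    proof (intro conjI ballI exI)
      show "kappa e u = 0" if "u \<in> I" for u using k0 that by simp
      show "c1 \<noteq> 0" "c2 \<noteq> 0" by (fact c1, fact c2)
      show "?\<delta> u = c2" if "u \<in> I" for u using dc that c2_def by simp
      show "g u = c1" if "u \<in> I" for u using gc that c1_def by simp
      show "((\<lambda>x. f x / (c1 * c2)) has_real_derivative lambda_inv s e u) (at u)" if u: "u \<in> I" for u
        using DERIV_cdivide[OF df[OF u], of "c1 * c2"] fd[OF u] c1 c2 by simp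
      show "f u = c1 * c2 * (f u / (c1 * c2)) + 0" if "u \<in> I" for u using c1 c2 by simp
    qed
  next
    assume H: "(\<forall>u\<in>I. kappa e u = 0) \<and>
          (\<exists>c1 c2 c3 \<Lambda>. c1 \<noteq> 0 \<and> c2 \<noteq> 0 \<and>
             (\<forall>u\<in>I. dparam s e u = c2) \<and> (\<forall>u\<in>I. g u = c1) \<and>
             (\<forall>u\<in>I. (\<Lambda> has_real_derivative lambda_inv s e u) (at u)) \<and>
             (\<forall>u\<in>I. f u = c1 * c2 * \<Lambda> u + c3))"
    then obtain c1 c2 c3 \<Lambda> where k0: "\<forall>u\<in>I. kappa e u = 0" and c1: "c1 \<noteq> 0" and c2: "c2 \<noteq> 0"
      and dc: "\<forall>u\<in>I. dparam s e u = c2" and gc: "\<forall>u\<in>I. g u = c1"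
      and L: "\<forall>u\<in>I. (\<Lambda> has_real_derivative lambda_inv s e u) (at u)"
      and fe: "\<forall>u\<in>I. f u = c1 * c2 * \<Lambda> u + c3" by blast
    show "\<forall>u\<in>I. \<forall>v\<in>J. divI_T s e f g u v = 0"
    proof (intro ballI)
      fix u v assume u: "u \<in> I" and v: "v \<in> J"
      have "((\<lambda>x. c2) has_real_derivative 0) (at u)" by simp
      then have "(?\<delta> has_real_derivative 0) (at u)"
        by (rule has_field_derivative_transform_within_open[OF _ oI u]) (use dc in simp)
      then have d0: "deriv ?\<delta> u = 0" by (rule DERIV_imp_deriv)
      have "((\<lambda>x. c1) has_real_derivative 0) (at u)" by simp
      then have "(g has_real_derivative 0) (at u)"
        by (rule has_field_derivative_transform_within_open[OF _ oI u]) (use gc in simp)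
      then have g0: "deriv g u = 0" by (rule DERIV_imp_deriv)
      have "((\<lambda>x. c1 * c2 * \<Lambda> x + c3) has_real_derivative c1 * c2 * lambda_inv s e u) (at u)"
        using L u by (auto intro!: derivative_eq_intros)
      then have "(f has_real_derivative c1 * c2 * lambda_inv s e u) (at u)"
        by (rule has_field_derivative_transform_within_open[OF _ oI u]) (use fe in simp)
      then have fd: "deriv f u = c1 * c2 * lambda_inv s e u" by (rule DERIV_imp_deriv)
      have "(wfun s e u v)^2 * divI_T s e f g u v = 0"
        unfolding hp[OF u] d0 g0 fd using k0 u dc gc c2 by simp
      moreover have "wfun s e u v > 0" using w_pos skew u by blast
      ultimately show "divI_T s e f g u v = 0" by simp
    qed
  qed
qed

end
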